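(* Let $\tau\in\mathcal S_0^+$ and $x,y\in[0,\infty)$. Then $$\tau(x)+\tau(y)\ \le\ \tau(|x-y|)+2y\,\tau'(x).$$
   Context: $\mathcal S_0^+$ is the set of nondecreasing convex $\tau:[0,\infty)\to\mathbb R$, differentiable on $(0,\infty)$ with concave derivative $\tau'$, where $\tau'(0):=\lim_{x\searrow0}\tau'(x)$, such that $\tau(0)=0$ and $\tau'(x)>0$ for all $x>0$. *)

theory Defs
  imports "HOL-Analysis.Analysis"
begin

definition tau_deriv :: "(real \<Rightarrow> real) \<Rightarrow> real \<Rightarrow> real" where
  "tau_deriv \<tau> x = (if x > 0 then deriv \<tau> x else Lim (at_right 0) (deriv \<tau>))"

text \<open>The class S_0^+ (functions on [0,infinity); values outside are irrelevant).\<close>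
definition S0plus :: "(real \<Rightarrow> real) set" where
  "S0plus = {\<tau>.
      mono_on {0..} \<tau>
    \<and> convex_on {0..} \<tau>
    \<and> (\<forall>x>0. \<tau> differentiable (at x))
    \<and> concave_on {0<..} (deriv \<tau>)
    \<and> \<tau> 0 = 0
    \<and> (\<forall>x>0. deriv \<tau> x > 0)}"

end

theory Submission
  imports Defs
begin

lemma tangent:
  assumes "\<tau> \<in> S0plus" "c > 0" "z \<ge> 0"
  shows "\<tau> z - \<tau> c \<ge> deriv \<tau> c * (z - c)"
proof -
  have cv: "convex_on {0..} \<tau>" and d: "\<tau> differentiable (at c)"
    using assms unfolding S0plus_def by auto
  have "(\<tau> has_field_derivative deriv \<tau> c) (at c within {0..})"
    using d DERIV_deriv_iff_real_differentiable has_field_derivative_at_within by blast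
  moreover have "c \<in> interior {0..}" using assms by simp
  ultimately show ?thesis
    using convex_on_imp_above_tangent[OF cv _ _ _] assms by (simp add: is_interval_connected)
qed

lemma deriv_mono:
  assumes "\<tau> \<in> S0plus" "0 < a" "a \<le> b"
  shows "deriv \<tau> a \<le> deriv \<tau> b"
proof -
  have 1: "\<tau> b - \<tau> a \<ge> deriv \<tau> a * (b - a)" using tangent[OF assms(1)] assms by auto
  have 2: "\<tau> a - \<tau> b \<ge> deriv \<tau> b * (a - b)" using tangent[OF assms(1)] assms by auto
  from 1 2 have "(deriv \<tau> b - deriv \<tau> a) * (b - a) \<ge> 0" by (simp add: algebra_simps)
  then show ?thesis using assms
    by (cases "a = b") (auto simp: zero_le_mult_iff)
qed

lemma ratio:
  assumes "\<tau> \<in> S0plus" "0 < x" "x < y"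
  shows "x * deriv \<tau> y \<le> y * deriv \<tau> x"
proof (rule ccontr)
  let ?g = "deriv \<tau>"
  assume "\<not> ?thesis"
  then have c: "x * ?g y - y * ?g x > 0" by simp
  have conc: "concave_on {0<..} ?g" and pos: "\<forall>t>0. ?g t > 0"
    using assms(1) unfolding S0plus_def by auto
  have gm: "?g x \<le> ?g y" using deriv_mono[OF assms(1)] assms by auto
  define D where "D = ?g y - ?g x + 1"
  have D: "D > 0" using gm D_def by simp
  define e where "e = min (x/2) ((x * ?g y - y * ?g x) / (2*D))"
  have e0: "e > 0" using c D assms by (simp add: e_def)
  have ex: "e < x" using assms by (simp add: e_def)
  have eD: "e * D < x * ?g y - y * ?g x"
  proof -
    have "e \<le> (x * ?g y - y * ?g x) / (2*D)" by (simp add: e_def)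
    then have "e * D \<le> (x * ?g y - y * ?g x) / 2" using D by (simp add: field_simps)
    then show ?thesis using c by (simp add: field_simps)
  qed
  define t where "t = (x - e) / (y - e)"
  have t0: "0 \<le> t" "t \<le> 1" using ex assms by (auto simp: t_def)
  have ye: "y - e \<noteq> 0" using ex assms by simp
  have tye: "t * (y - e) = x - e" unfolding t_def using ye by simp
  then have xe: "t * y + (1 - t) * e = x" by (simp add: algebra_simps)
  have "?g (t * y + (1 - t) * e) \<ge> t * ?g y + (1 - t) * ?g e"
  proof -
    have "?g ((1 - t) * e + t * y) \<ge> (1 - t) * ?g e + t * ?g y"
      using concave_onD[OF conc t0, of e y] assms e0 by simp
    then show ?thesis by (simp add: add.commute)
  qed
  then have "?g x \<ge> t * ?g y + (1 - t) * ?g e" unfolding xe .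
  moreover have "(1 - t) * ?g e \<ge> 0" using pos e0 t0 by (simp add: less_imp_le)
  ultimately have "?g x \<ge> t * ?g y" by linarith
  moreover have "y - e > 0" using ex assms by simp
  ultimately have "?g x * (y - e) \<ge> t * ?g y * (y - e)" by (rule mult_right_mono[OF _ less_imp_le])
  moreover have "t * ?g y * (y - e) = (x - e) * ?g y" using tye by (metis mult.commute mult.left_commute)
  ultimately have "?g x * (y - e) \<ge> (x - e) * ?g y" by simp
  then have "y * ?g x - x * ?g y \<ge> e * (?g x - ?g y)" by (simp add: algebra_simps)
  moreover have "e * (?g x - ?g y) \<ge> - (e * D)" using e0 by (simp add: D_def algebra_simps)
  ultimately show False using eD by linarith
qed

lemma lim0:
  assumes "\<tau> \<in> S0plus"
  shows "Lim (at_right 0) (deriv \<tau>) \<ge> 0"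
proof -
  have pos: "\<forall>t>0. deriv \<tau> t > 0" using assms unfolding S0plus_def by auto
  have "(deriv \<tau> \<longlongrightarrow> Inf (deriv \<tau> ` ({0<..} \<inter> UNIV))) (at 0 within ({0<..} \<inter> UNIV))"
    by (rule Lim_right_bound[where K=0]) (use deriv_mono[OF assms] pos in \<open>auto simp: less_imp_le\<close>)
  then have T: "(deriv \<tau> \<longlongrightarrow> Inf (deriv \<tau> ` {0<..})) (at_right 0)" by simp
  then have "Lim (at_right 0) (deriv \<tau>) = Inf (deriv \<tau> ` {0<..})"
    by (simp add: tendsto_Lim)
  moreover have "Inf (deriv \<tau> ` {0<..}) \<ge> 0"
    using tendsto_lowerbound[OF T] pos eventually_at_right_less
    by (metis (no_types, lifting) eventually_at_right_field less_imp_le trivial_limit_at_right_real)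
  ultimately show ?thesis by simp
qed

theorem mainTheorem18:
  fixes \<tau> :: "real \<Rightarrow> real" and x y :: real
  assumes "\<tau> \<in> S0plus" and "x \<ge> 0" and "y \<ge> 0"
  shows "\<tau> x + \<tau> y \<le> \<tau> \<bar>x - y\<bar> + 2 * y * tau_deriv \<tau> x"
proof (cases "x = 0")
  case True
  have "\<tau> 0 = 0" using assms(1) unfolding S0plus_def by auto
  then show ?thesis using True lim0[OF assms(1)] assms by (simp add: tau_deriv_def)
next
  case False
  then have x0: "x > 0" using assms by simp
  have td: "tau_deriv \<tau> x = deriv \<tau> x" using x0 by (simp add: tau_deriv_def)
  have t00: "\<tau> 0 = 0" using assms(1) unfolding S0plus_def by auto
  have pos: "\<forall>t>0. deriv \<tau> t > 0" using assms(1) unfolding S0plus_def by auto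
  show ?thesis
  proof (cases "y \<le> x")
    case True
    have a: "\<tau> (x - y) - \<tau> x \<ge> deriv \<tau> x * (x - y - x)" using tangent[OF assms(1) x0, of "x - y"] True by simp
    have b: "\<tau> y \<le> y * deriv \<tau> x"
    proof (cases "y = 0")
      case True then show ?thesis using t00 by simp
    next
      case False
      then have y0: "y > 0" using assms by simp
      have "\<tau> 0 - \<tau> y \<ge> deriv \<tau> y * (0 - y)" using tangent[OF assms(1) y0, of 0] by simp
      then have "\<tau> y \<le> y * deriv \<tau> y" using t00 by (simp add: algebra_simps)
      moreover have "deriv \<tau> y \<le> deriv \<tau> x" using deriv_mono[OF assms(1) y0 True] .
      moreover have "y * deriv \<tau> y \<le> y * deriv \<tau> x" using y0 \<open>deriv \<tau> y \<le> deriv \<tau> x\<close> by simp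
      ultimately show ?thesis using t00 by linarith
    qed
    show ?thesis using a b True td by (simp add: algebra_simps)
  next
    case False
    have a: "\<tau> (y - x) - \<tau> y \<ge> deriv \<tau> y * (y - x - y)" using tangent[OF assms(1), of y "y - x"] x0 False by simp
    have b: "\<tau> 0 - \<tau> x \<ge> deriv \<tau> x * (0 - x)" using tangent[OF assms(1) x0, of 0] by simp
    have r: "x * deriv \<tau> y \<le> y * deriv \<tau> x" using ratio[OF assms(1) x0] False by simp
    have "y * deriv \<tau> x \<le> (2*y - x) * deriv \<tau> x" using pos x0 False by (intro mult_right_mono) auto
    then show ?thesis using a b r False td t00 by (simp add: algebra_simps)
  qed
qed

end
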